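(* Let $q$ be a prime power and let $\lambda$ be the Liouville function on monic polynomials of $\mathbb{F}_{q^2}[T]$. For every unitary self-reciprocal polynomial $f\in\mathbb{F}_{q^2}[T]$ we have $\lambda(f)=(-1)^{\deg f}$.
   Context: The Liouville function $\lambda$ is the unique completely multiplicative function on monic polynomials of $\mathbb{F}_{q^2}[T]$ with $\lambda(P)=-1$ for every monic irreducible $P$. For a monic $f\in\mathbb{F}_{q^2}[T]$ of degree $n$ with $f(0)\neq0$, let $\sigma(f)$ be the polynomial obtained by raising each coefficient of $f$ to the $q$-th power, and define $\tilde f(T)=T^n\sigma(f)(T^{-1})/\sigma(f)(0)$; explicitly, if $f=a_0+a_1T+\cdots+a_{n-1}T^{n-1}+T^n$ then $\tilde f=(1/a_0)^q+(a_{n-1}/a_0)^qT+\cdots+(a_1/a_0)^qT^{n-1}+T^n$. A monic $f$ with $f(0)\ne0$ is unitary self-reciprocal if $f=\tilde f$ (the constant polynomial $1$ included). *)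

theory Defs
  imports "HOL-Computational_Algebra.Computational_Algebra"
begin

definition liouville :: "'a::field_gcd poly \<Rightarrow> int" where
  "liouville f = (-1) ^ size (prime_factorization f)"

definition frob_poly :: "nat \<Rightarrow> 'a::field poly \<Rightarrow> 'a poly" where
  "frob_poly q f = map_poly (\<lambda>c. c ^ q) f"

text \<open>tilde f = T^n sigma(f)(1/T) / sigma(f)(0), with n = deg f.\<close>
definition unitary_recip :: "nat \<Rightarrow> 'a::field poly \<Rightarrow> 'a poly" where
  "unitary_recip q f = smult (inverse (coeff (frob_poly q f) 0)) (reflect_poly (frob_poly q f))"

definition unitary_self_reciprocal :: "nat \<Rightarrow> 'a::field poly \<Rightarrow> bool" where
  "unitary_self_reciprocal q f \<longleftrightarrow>
     lead_coeff f = 1 \<and> poly f 0 \<noteq> 0 \<and> f = unitary_recip q f"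

end

theory Submission
  imports Defs "HOL-Algebra.Algebraic_Closure_Type" "HOL-Library.FuncSet"
begin
hide_const (open) Divisibility.prime Divisibility.irreducible Module.module.smult Polynomials.lead_coeff Polynomials.degree UnivPoly.up_ring.monom UnivPoly.up_ring.coeff

lemma card_UNIV_zero: "of_nat (card (UNIV :: 'a::{finite,ring_1} set)) = (0::'a)"
proof -
  have b: "bij_betw (\<lambda>z::'a. z + 1) UNIV UNIV"
    by (rule bij_betwI[of _ _ _ "\<lambda>z. z - 1"]) auto
  have "(\<Sum>z\<in>(UNIV::'a set). z) = (\<Sum>z\<in>UNIV. z + 1)"
    using sum.reindex_bij_betw[OF b, of "\<lambda>z. z"] by simp
  also have "\<dots> = (\<Sum>z\<in>UNIV. z) + of_nat (card (UNIV :: 'a set))"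
    by (simp add: sum.distrib)
  finally show ?thesis by simp
qed

lemma fin_field_pow_card: "(x::'a::{field,finite}) ^ card (UNIV :: 'a set) = x"
proof (cases "x = 0")
  case False
  have "x * (\<Prod>y\<in>UNIV-{0}. x * y) = x * x ^ (card (UNIV :: 'a set) - 1) * \<Prod>(UNIV-{0})"
    by (simp add: prod.distrib mult_ac)
  also have "x * x ^ (card (UNIV :: 'a set) - 1) = x ^ Suc (card (UNIV :: 'a set) - 1)"
    by (subst power_Suc) auto
  also have "Suc (card (UNIV :: 'a set) - 1) = card (UNIV :: 'a set)"
    using finite_UNIV_card_ge_0[where ?'a = 'a] by simp
  also have "(\<Prod>y\<in>UNIV-{0}. x * y) = (\<Prod>y\<in>UNIV-{0}. y)"
    by (rule prod.reindex_bij_witness[of _ "\<lambda>y. y / x" "\<lambda>y. x * y"]) (use False in auto)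
  finally show ?thesis
    by simp
qed (use finite_UNIV_card_ge_0[where ?'a = 'a] in auto)

lemma fin_field_pow_card_pow: "(x::'a::{field,finite}) ^ (card (UNIV :: 'a set) ^ m) = x"
  by (induction m) (simp_all add: fin_field_pow_card power_mult)

lemma char_eq:
  assumes "prime p" "q = p ^ k" "k > 0" "card (UNIV :: 'a::{field,finite} set) = q ^ 2"
  shows "CHAR('a) = p"
proof -
  have pos: "CHAR('a) > 0" by (rule finite_imp_CHAR_pos) simp
  have pr: "prime CHAR('a)" using prime_CHAR_semidom[OF pos] .
  have "CHAR('a) dvd card (UNIV :: 'a set)"
    using card_UNIV_zero[where 'a='a] of_nat_eq_0_iff_char_dvd by blast
  hence "CHAR('a) dvd p ^ (k * 2)" using assms by (simp add: power_mult)
  hence "CHAR('a) dvd p" using pr prime_dvd_power by blast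
  thus ?thesis using pr assms(1) primes_dvd_imp_eq by blast
qed

lemma map_poly_add_hom:
  assumes "f 0 = 0" "\<And>a b. f (a + b) = f a + f b"
  shows "map_poly f (p + q) = map_poly f p + map_poly f q"
  by (intro poly_eqI) (simp add: coeff_map_poly assms)

lemma map_poly_mult_hom:
  fixes f :: "'a::comm_ring_1 \<Rightarrow> 'b::comm_ring_1"
  assumes "f 0 = 0" "\<And>a b. f (a + b) = f a + f b" "\<And>a b. f (a * b) = f a * f b"
  shows "map_poly f (p * q) = map_poly f p * map_poly f q"
proof (induction p rule: pCons_induct)
  case (pCons a p)
  have "map_poly f (pCons a p * q) = map_poly f (smult a q + pCons 0 (p * q))" by simp
  also have "\<dots> = smult (f a) (map_poly f q) + pCons 0 (map_poly f p * map_poly f q)"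
    by (simp add: map_poly_add_hom assms map_poly_smult map_poly_pCons pCons.IH)
  also have "\<dots> = map_poly f (pCons a p) * map_poly f q"
    by (simp add: map_poly_pCons assms)
  finally show ?case .
qed simp

lemma map_poly_reflect:
  assumes "f 0 = 0" "\<And>x. x \<noteq> 0 \<Longrightarrow> f x \<noteq> 0"
  shows "map_poly f (reflect_poly p) = reflect_poly (map_poly f p)"
  by (intro poly_eqI) (simp add: coeff_map_poly assms coeff_reflect_poly degree_map_poly)

lemma to_ac_map_mult: "map_poly to_ac (p * q) = map_poly to_ac p * map_poly to_ac (q :: 'a::field poly)"
  by (rule map_poly_mult_hom) auto

lemma to_ac_map_add: "map_poly to_ac (p + q) = map_poly to_ac p + map_poly to_ac (q :: 'a::field poly)"
  by (rule map_poly_add_hom) auto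

lemma frob_eval:
  fixes g :: "'a::field poly" and z :: "'a alg_closure"
  assumes pr: "prime CHAR('a)" and e: "e = CHAR('a) ^ j"
  shows "poly (map_poly to_ac g) z ^ e = poly (map_poly to_ac (map_poly (\<lambda>c. c ^ e) g)) (z ^ e)"
proof (induction g rule: pCons_induct)
  case (pCons a p)
  have epos: "e > 0" using e pr prime_gt_0_nat by auto
  have prL: "prime CHAR('a alg_closure)" using pr by simp
  have eL: "e = CHAR('a alg_closure) ^ j" using e by simp
  have "poly (map_poly to_ac (pCons a p)) z ^ e = (to_ac a + z * poly (map_poly to_ac p) z) ^ e"
    by (simp add: map_poly_pCons)
  also have "\<dots> = to_ac a ^ e + z ^ e * poly (map_poly to_ac p) z ^ e"
    by (simp add: freshmans_dream'[OF prL eL] power_mult_distrib)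
  also have "\<dots> = poly (map_poly to_ac (map_poly (\<lambda>c. c ^ e) (pCons a p))) (z ^ e)"
    using epos by (simp add: map_poly_pCons pCons.IH)
  finally show ?case .
qed (use assms prime_gt_0_nat in auto)

lemma kernel_lemma:
  fixes P g :: "'a::field_gcd poly"
  assumes irr: "irreducible P" and "poly (map_poly to_ac P) \<alpha> = 0" "poly (map_poly to_ac g) \<alpha> = 0"
  shows "P dvd g"
proof (rule ccontr)
  assume "\<not> P dvd g"
  hence "coprime P g" using irr irreducible_imp_prime_elem prime_elem_imp_coprime by blast
  hence "gcd P g = 1" by simp
  hence "fst (bezout_coefficients P g) * P + snd (bezout_coefficients P g) * g = 1"
    using bezout_coefficients_fst_snd by metis
  hence "poly (map_poly to_ac (fst (bezout_coefficients P g) * P + snd (bezout_coefficients P g) * g)) \<alpha> = 1"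
    by simp
  thus False using assms by (simp add: to_ac_map_add to_ac_map_mult)
qed


lemma to_ac_map_diff: "map_poly to_ac (p - q) = map_poly to_ac p - map_poly to_ac (q :: 'a::field poly)"
  by (intro poly_eqI) (simp add: coeff_map_poly)

lemma map_pow_fix:
  fixes g :: "'a::{field,finite} poly"
  shows "map_poly (\<lambda>c. c ^ (card (UNIV::'a set) ^ m)) g = g"
  by (intro poly_eqI) (simp add: coeff_map_poly fin_field_pow_card_pow)

lemma sr_irred_odd:
  fixes P :: "'a::{field_gcd,finite} poly"
  assumes pr: "prime CHAR('a)" and qk: "q = CHAR('a) ^ k"
    and Qq: "card (UNIV::'a set) = q * q"
    and irr: "irreducible P" and mon: "lead_coeff P = 1" and c0: "coeff P 0 \<noteq> 0"
    and sr: "unitary_recip q P = P"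
  shows "odd (degree P)"
proof -
  define Q where "Q = card (UNIV :: 'a set)"
  define n where "n = degree P"
  define PL where "PL = map_poly to_ac P"
  have QCH: "Q ^ m = CHAR('a) ^ (2*k*m)" for m
    unfolding Q_def Qq qk by (simp add: power_mult[symmetric] power_add[symmetric] mult_2)
  have fixP: "map_poly (\<lambda>c. c ^ (Q^m)) g = g" for m and g :: "'a poly"
    unfolding Q_def by (rule map_pow_fix)
  have frobQ: "poly (map_poly to_ac g) z ^ (Q^m) = poly (map_poly to_ac g) (z ^ (Q^m))"
    for z :: "'a alg_closure" and m and g :: "'a poly"
    using frob_eval[OF pr QCH[of m], of g z] fixP[of m g] by simp
  have Qgt1: "Q > 1"
  proof -
    have "card {0::'a, 1} \<le> Q" unfolding Q_def by (rule card_mono) auto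
    thus ?thesis by simp
  qed
  have P0: "P \<noteq> 0" using mon by auto
  have npos: "n > 0"
  proof (rule ccontr)
    assume "\<not> n > 0"
    hence "is_unit P" using P0 is_unit_iff_degree n_def by auto
    thus False using irr irreducible_not_unit by blast
  qed
  have degPL: "degree PL = n" unfolding PL_def n_def by (simp add: degree_map_poly)
  have PL0: "PL \<noteq> 0" using degPL npos by auto
  obtain \<alpha> where \<alpha>: "poly PL \<alpha> = 0" using alg_closed_imp_poly_has_root degPL npos by auto
  have \<alpha>0: "\<alpha> \<noteq> 0"
  proof
    assume "\<alpha> = 0"
    hence "coeff PL 0 = 0" using \<alpha> by (simp add: poly_0_coeff_0)
    thus False using c0 by (simp add: PL_def coeff_map_poly)
  qed
  have qpos: "q > 0" using qk pr prime_gt_0_nat by auto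
  define h where "h = frob_poly q P"
  define c where "c = coeff h 0"
  have c_eq: "c = coeff P 0 ^ q" using qpos by (simp add: c_def h_def frob_poly_def coeff_map_poly)
  have cnz: "c \<noteq> 0" using c_eq c0 by simp
  have Peq: "P = smult (inverse c) (reflect_poly h)"
    using sr by (simp add: unitary_recip_def c_def h_def)
  have "PL = smult (to_ac (inverse c)) (reflect_poly (map_poly to_ac h))"
    unfolding PL_def by (subst Peq) (simp add: map_poly_smult map_poly_reflect)
  hence "poly PL \<alpha> = to_ac (inverse c) * (\<alpha> ^ degree (map_poly to_ac h) * poly (map_poly to_ac h) (inverse \<alpha>))"
    using \<alpha>0 by (simp add: poly_reflect_poly_nz)
  hence hroot: "poly (map_poly to_ac h) (inverse \<alpha>) = 0" using \<alpha> \<alpha>0 cnz by simp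
  define \<beta> where "\<beta> = inverse \<alpha> ^ q"
  have hh: "map_poly (\<lambda>c. c ^ q) h = P"
  proof -
    have "map_poly (\<lambda>c. c ^ q) h = map_poly (\<lambda>c. c ^ (Q ^ 1)) P"
      unfolding h_def frob_poly_def using qpos
      by (subst map_poly_map_poly) (auto simp: o_def Q_def Qq power_mult[symmetric])
    thus ?thesis using fixP[of 1 P] by simp
  qed
  have \<beta>root: "poly PL \<beta> = 0"
    using frob_eval[OF pr qk, of h "inverse \<alpha>"] hroot hh qpos by (simp add: PL_def \<beta>_def power_0_left)
  define r where "r j = \<alpha> ^ (Q ^ j)" for j
  have rroot: "poly PL (r j) = 0" for j
    using frobQ[of P \<alpha> j] \<alpha> Qgt1 unfolding PL_def r_def by (simp add: power_0_left)
  have cancel: "y = z" if "y ^ (Q ^ m) = z ^ (Q ^ m)" for y z :: "'a alg_closure" and m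
  proof -
    have prL: "prime CHAR('a alg_closure)" using pr by simp
    have eL: "Q ^ m = CHAR('a alg_closure) ^ (2*k*m)" using QCH by simp
    have "((y - z) + z) ^ (Q ^ m) = (y - z) ^ (Q ^ m) + z ^ (Q ^ m)"
      by (rule freshmans_dream'[OF prL eL])
    hence "(y - z) ^ (Q ^ m) = 0" using that by simp
    thus ?thesis by simp
  qed
  have shift: "\<alpha> ^ (Q ^ (a + b)) = (\<alpha> ^ (Q ^ a)) ^ (Q ^ b)" for a b
    by (simp add: power_add power_mult)
  define R where "R = {x. poly PL x = 0}"
  have finR: "finite R" unfolding R_def using PL0 by (rule poly_roots_finite)
  have cardR: "card R \<le> n" unfolding R_def using card_poly_roots_bound[OF PL0] degPL by simp
  have ex_d: "\<exists>d. 0 < d \<and> d \<le> n \<and> \<alpha> ^ (Q ^ d) = \<alpha>"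
  proof -
    have "\<not> inj_on r {0..n}"
    proof
      assume "inj_on r {0..n}"
      hence "card (r ` {0..n}) = Suc n" by (simp add: card_image)
      moreover have "r ` {0..n} \<subseteq> R" using rroot R_def by auto
      ultimately have "Suc n \<le> card R" using finR card_mono by metis
      thus False using cardR by simp
    qed
    then obtain i j where ij: "i \<in> {0..n}" "j \<in> {0..n}" "i \<noteq> j" "r i = r j"
      unfolding inj_on_def by blast
    have main: "\<exists>d. 0 < d \<and> d \<le> n \<and> \<alpha> ^ (Q ^ d) = \<alpha>"
      if "a < b" "b \<le> n" "r a = r b" for a b
    proof -
      have "(\<alpha> ^ (Q ^ (b - a))) ^ (Q ^ a) = \<alpha> ^ (Q ^ a)"
        using that shift[of "b - a" a] by (simp add: r_def)
      hence "\<alpha> ^ (Q ^ (b - a)) = \<alpha>" by (rule cancel)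
      thus ?thesis using that by (intro exI[of _ "b - a"]) auto
    qed
    show ?thesis
    proof (cases "i < j")
      case True thus ?thesis using main ij by auto
    next
      case False thus ?thesis using main[of j i] ij by auto
    qed
  qed
  define d0 where "d0 = (LEAST d. 0 < d \<and> \<alpha> ^ (Q ^ d) = \<alpha>)"
  have d0: "0 < d0 \<and> \<alpha> ^ (Q ^ d0) = \<alpha>"
    unfolding d0_def using ex_d by (metis (mono_tags, lifting) LeastI)
  have d0_le: "d0 \<le> n"
    using ex_d unfolding d0_def by (metis (mono_tags, lifting) Least_le order_trans)
  have d0_min: "\<not> (0 < d \<and> \<alpha> ^ (Q ^ d) = \<alpha>)" if "d < d0" for d
    using that unfolding d0_def by (rule not_less_Least)
  have period: "\<alpha> ^ (Q ^ (d0 * t)) = \<alpha>" for t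
  proof (induction t)
    case (Suc t)
    have "\<alpha> ^ (Q ^ (d0 * Suc t)) = (\<alpha> ^ (Q ^ (d0 * t))) ^ (Q ^ d0)"
      using shift[of "d0 * t" d0] by (simp add: add.commute)
    thus ?case using Suc d0 by simp
  qed simp
  have claimA: "d0 dvd m" if "\<alpha> ^ (Q ^ m) = \<alpha>" for m
  proof -
    have "m = d0 * (m div d0) + m mod d0" by simp
    hence "\<alpha> ^ (Q ^ m) = (\<alpha> ^ (Q ^ (d0 * (m div d0)))) ^ (Q ^ (m mod d0))"
      using shift by metis
    hence "\<alpha> ^ (Q ^ (m mod d0)) = \<alpha>" using that period by simp
    moreover have "m mod d0 < d0" using d0 by simp
    ultimately have "m mod d0 = 0" using d0_min by auto
    thus ?thesis by auto
  qed
  have n_le: "n \<le> d0"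
  proof -
    define A where "A = PiE {..<n} (\<lambda>_. UNIV :: 'a set)"
    define G where "G f = Poly (map f [0..<n])" for f :: "nat \<Rightarrow> 'a"
    define E where "E f = poly (map_poly to_ac (G f)) \<alpha>" for f
    define W where "W = (monom 1 (Q ^ d0) - [:0, 1:] :: 'a alg_closure poly)"
    have cardA: "card A = Q ^ n" unfolding A_def Q_def by (simp add: card_PiE)
    have coeffG: "coeff (G f) i = (if i < n then f i else 0)" for f i
      by (simp add: G_def nth_default_def)
    have degG: "degree (G f - G g) < n" for f g
    proof -
      have "degree (G f - G g) \<le> n - 1"
        by (rule degree_le) (use npos in \<open>auto simp: coeffG\<close>)
      thus ?thesis using npos by simp
    qed
    have injE: "inj_on E A"
    proof
      fix f g assume fg: "f \<in> A" "g \<in> A" "E f = E g"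
      hence "poly (map_poly to_ac (G f - G g)) \<alpha> = 0"
        by (simp add: E_def to_ac_map_diff)
      hence dv: "P dvd G f - G g" using kernel_lemma[OF irr] \<alpha> PL_def by blast
      have "G f - G g = 0"
      proof (rule ccontr)
        assume nz: "G f - G g \<noteq> 0"
        have "degree P \<le> degree (G f - G g)" using dvd_imp_degree_le[OF dv nz] .
        thus False using degG[of f g] n_def by simp
      qed
      hence Geq: "G f = G g" by simp
      show "f = g"
      proof (rule PiE_ext[OF fg(1)[unfolded A_def] fg(2)[unfolded A_def]])
        fix i assume "i \<in> {..<n}"
        thus "f i = g i" using arg_cong[OF Geq, of "\<lambda>p. coeff p i"] by (simp add: coeffG)
      qed
    qed
    have W_root: "poly W y = y ^ (Q ^ d0) - y" for y by (simp add: W_def poly_monom)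
    have Q1: "Q ^ d0 > 1" using one_less_power[OF Qgt1, of d0] d0 by blast
    have W0: "W \<noteq> 0"
    proof
      assume "W = 0"
      hence "coeff W (Q ^ d0) = 0" by simp
      thus False using Q1 by (simp add: W_def coeff_pCons split: nat.splits)
    qed
    have degW: "degree W \<le> Q ^ d0"
      unfolding W_def using Q1
      by (intro degree_diff_le) (auto simp: degree_monom_le)
    have EA: "E ` A \<subseteq> {y. poly W y = 0}"
    proof
      fix y assume "y \<in> E ` A"
      then obtain f where y: "y = E f" by auto
      have "y ^ (Q ^ d0) = poly (map_poly to_ac (G f)) (\<alpha> ^ (Q ^ d0))"
        unfolding y E_def by (rule frobQ)
      also have "\<dots> = y" using d0 y E_def by simp
      finally show "y \<in> {y. poly W y = 0}" by (simp add: W_root)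
    qed
    have "Q ^ n \<le> card {y. poly W y = 0}"
    proof -
      have "Q ^ n = card (E ` A)" using cardA injE by (simp add: card_image)
      also have "\<dots> \<le> card {y. poly W y = 0}" by (rule card_mono[OF poly_roots_finite[OF W0] EA])
      finally show ?thesis .
    qed
    also have "\<dots> \<le> Q ^ d0" using card_poly_roots_bound[OF W0] degW by linarith
    finally show ?thesis using Qgt1 power_le_imp_le_exp by blast
  qed
  have d0n: "d0 = n" using n_le d0_le by simp
  have injr: "inj_on r {..<n}"
  proof
    fix i j assume ij: "i \<in> {..<n}" "j \<in> {..<n}" "r i = r j"
    show "i = j"
    proof (rule ccontr)
      assume "i \<noteq> j"
      have main: False if "a < b" "b < n" "r a = r b" for a b
      proof -
        have "(\<alpha> ^ (Q ^ (b - a))) ^ (Q ^ a) = \<alpha> ^ (Q ^ a)"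
          using that shift[of "b - a" a] by (simp add: r_def)
        hence "\<alpha> ^ (Q ^ (b - a)) = \<alpha>" by (rule cancel)
        moreover have "b - a < n" using that by simp
        ultimately show False using d0_min[of "b - a"] that d0n by auto
      qed
      show False
      proof (cases "i < j")
        case True thus ?thesis using main ij by auto
      next
        case False thus ?thesis using main[of j i] ij \<open>i \<noteq> j\<close> by auto
      qed
    qed
  qed
  have "r ` {..<n} = R"
  proof (rule card_seteq[OF finR])
    show "r ` {..<n} \<subseteq> R" using rroot R_def by auto
    show "card R \<le> card (r ` {..<n})" using injr cardR by (simp add: card_image)
  qed
  moreover have "\<beta> \<in> R" using \<beta>root R_def by simp
  ultimately obtain i where i: "i < n" "\<beta> = \<alpha> ^ (Q ^ i)" unfolding r_def by auto
  have "\<beta> ^ (Q ^ i) = \<alpha> ^ (Q ^ (i + i))" using i shift by simp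
  moreover have "\<beta> ^ (Q ^ i) = \<alpha> ^ (Q ^ 1)"
  proof -
    have "\<beta> ^ (Q ^ i) = inverse \<alpha> ^ (Q ^ i * q)" by (simp add: \<beta>_def power_mult[symmetric] mult.commute)
    also have "\<dots> = (inverse \<beta>) ^ q" by (simp add: power_mult power_inverse i(2))
    also have "\<dots> = \<alpha> ^ (q * q)" by (simp add: \<beta>_def power_inverse power_mult)
    finally show ?thesis by (simp add: Q_def Qq)
  qed
  ultimately have eq: "\<alpha> ^ (Q ^ (i + i)) = \<alpha> ^ (Q ^ 1)" by simp
  show ?thesis
  proof (cases "i = 0")
    case True
    hence "\<alpha> ^ (Q ^ 1) = \<alpha>" using eq by simp
    hence "n dvd 1" using claimA d0n by metis
    thus ?thesis using n_def by simp
  next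
    case False
    hence "(\<alpha> ^ (Q ^ (i + i - 1))) ^ (Q ^ 1) = \<alpha> ^ (Q ^ 1)"
      using eq shift[of "i + i - 1" 1] by simp
    hence "\<alpha> ^ (Q ^ (i + i - 1)) = \<alpha>" by (rule cancel)
    hence "n dvd (i + i - 1)" using claimA d0n by metis
    moreover have "odd (i + i - 1)" using False by presburger
    ultimately show ?thesis using n_def dvd_trans by blast
  qed
qed


lemma inv_mset_even:
  assumes "image_mset g N = N" "\<forall>x\<in>#N. g (g x) = x \<and> g x \<noteq> x"
  shows "even (size N)"
  using assms
proof (induction "size N" arbitrary: N rule: less_induct)
  case less
  show ?case
  proof (cases "N = {#}")
    case True thus ?thesis by simp
  next
    case False
    then obtain x where x: "x \<in># N" by blast
    then obtain N1 where N1: "N = add_mset x N1" by (metis multi_member_split)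
    have gx: "g x \<in># N" using x less.prems(1) by (metis image_eqI set_image_mset)
    have gxx: "g x \<noteq> x" "g (g x) = x" using x less.prems(2) by auto
    hence "g x \<in># N1" using gx N1 by auto
    then obtain N2 where N2: "N1 = add_mset (g x) N2" by (metis multi_member_split)
    have NN: "N = add_mset x (add_mset (g x) N2)" using N1 N2 by simp
    have "add_mset (g x) (add_mset x (image_mset g N2)) = add_mset x (add_mset (g x) N2)"
      using less.prems(1) gxx unfolding NN by simp
    hence img: "image_mset g N2 = N2" by (simp add: add_mset_commute)
    have "even (size N2)"
      by (rule less.hyps[OF _ img]) (use less.prems(2) NN in auto)
    thus ?thesis using NN by simp
  qed
qed

lemma even_sum_mset:
  assumes "\<forall>x\<in>#A. even (h x :: nat)"
  shows "even (sum_mset (image_mset h A))"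
  using assms by (induction A) auto

lemma degree_prod_mset':
  assumes "0 \<notin># M"
  shows "degree (prod_mset M :: 'a::idom poly) = sum_mset (image_mset degree M)"
  using assms by (induction M) (auto simp: degree_mult_eq)

context
  fixes q :: nat and k :: nat
  assumes pr: "prime CHAR('a::{field_gcd,finite})" and qk: "q = CHAR('a) ^ k"
    and Qq: "card (UNIV::'a set) = q * q"
begin

lemma qpos: "q > 0" using qk pr prime_gt_0_nat by auto

lemma phi_add: "((a::'a) + b) ^ q = a ^ q + b ^ q"
  by (rule freshmans_dream'[OF pr qk])

lemma phi_phi: "((a::'a) ^ q) ^ q = a"
  using fin_field_pow_card[of a] by (simp add: Qq power_mult[symmetric])

lemma phi_nz: "((a::'a) ^ q = 0) \<longleftrightarrow> a = 0"
  using qpos by simp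

lemma frob_mult: "frob_poly q (f * g :: 'a poly) = frob_poly q f * frob_poly q g"
  unfolding frob_poly_def
  by (rule map_poly_mult_hom) (use qpos phi_add in \<open>auto simp: power_mult_distrib\<close>)

lemma frob_frob: "frob_poly q (frob_poly q (f :: 'a poly)) = f"
  unfolding frob_poly_def using qpos
  by (subst map_poly_map_poly) (auto simp: o_def phi_phi)

lemma coeff0_frob: "coeff (frob_poly q (f::'a poly)) 0 = coeff f 0 ^ q"
  using qpos by (simp add: frob_poly_def coeff_map_poly)

lemma degree_frob: "degree (frob_poly q (f::'a poly)) = degree f"
  unfolding frob_poly_def by (rule degree_map_poly) (simp add: phi_nz)

lemma lead_frob: "lead_coeff (frob_poly q (f::'a poly)) = lead_coeff f ^ q"
  using qpos by (simp add: degree_frob) (simp add: frob_poly_def coeff_map_poly)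

lemma U_mult: "unitary_recip q (f * g :: 'a poly) = unitary_recip q f * unitary_recip q g"
  unfolding unitary_recip_def frob_mult reflect_poly_mult coeff_mult_0
  by (simp add: mult_smult_left mult_smult_right mult.commute)

lemma U_one: "unitary_recip q (1 :: 'a poly) = 1"
  unfolding unitary_recip_def frob_poly_def using qpos by simp

lemma U_prod_mset: "unitary_recip q (prod_mset M :: 'a poly) = prod_mset (image_mset (unitary_recip q) M)"
  by (induction M) (simp_all add: U_one U_mult)

lemma coeff0_U:
  assumes "coeff f 0 \<noteq> 0"
  shows "coeff (unitary_recip q (f::'a poly)) 0 = inverse (coeff f 0 ^ q) * lead_coeff f ^ q"
  unfolding unitary_recip_def by (simp add: coeff0_frob lead_frob)

lemma degree_U:
  assumes "coeff f 0 \<noteq> 0"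
  shows "degree (unitary_recip q (f::'a poly)) = degree f"
  using assms unfolding unitary_recip_def
  by (simp add: coeff0_frob degree_frob phi_nz)

lemma lead_U:
  assumes "coeff f 0 \<noteq> 0"
  shows "lead_coeff (unitary_recip q (f::'a poly)) = 1"
proof -
  have "lead_coeff (unitary_recip q f) = inverse (coeff f 0 ^ q) * coeff (reflect_poly (frob_poly q f)) (degree f)"
    using degree_U[OF assms] unfolding unitary_recip_def by (simp add: coeff0_frob)
  also have "coeff (reflect_poly (frob_poly q f)) (degree f) = coeff f 0 ^ q"
    by (simp add: coeff_reflect_poly degree_frob coeff0_frob)
  finally show ?thesis using assms by simp
qed

lemma UU:
  assumes "coeff f 0 \<noteq> 0" "lead_coeff f = 1"
  shows "unitary_recip q (unitary_recip q (f::'a poly)) = f"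
proof -
  define a where "a = coeff f 0"
  have a0: "a \<noteq> 0" using assms a_def by simp
  have fr: "frob_poly q (unitary_recip q f) = smult (inverse a) (reflect_poly f)"
  proof -
    have "frob_poly q (unitary_recip q f) =
       smult ((inverse (a ^ q)) ^ q) (reflect_poly (frob_poly q (frob_poly q f)))"
      unfolding unitary_recip_def frob_poly_def[of q "smult _ _"] a_def
      using qpos
      by (simp add: map_poly_smult power_mult_distrib map_poly_reflect phi_nz coeff0_frob)
         (simp add: frob_poly_def)
    also have "(inverse (a ^ q)) ^ q = inverse a" by (simp add: power_inverse phi_phi)
    finally show ?thesis by (simp add: frob_frob)
  qed
  have "coeff (frob_poly q (unitary_recip q f)) 0 = inverse a"
    using assms by (simp add: fr)
  hence "unitary_recip q (unitary_recip q f) = smult a (reflect_poly (smult (inverse a) (reflect_poly f)))"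
    unfolding unitary_recip_def[of q "unitary_recip q f"] using assms(2) by (simp add: fr)
  also have "\<dots> = f" using a0 assms by (simp add: reflect_poly_smult a_def)
  finally show ?thesis .
qed

end

lemma parity_count:
  "even (size M + sum_mset (image_mset (d :: 'b \<Rightarrow> nat) M)) = even (size (filter_mset (\<lambda>x. even (d x)) M))"
  by (induction M) auto

lemma monic_normalize:
  fixes p :: "'a::field_gcd poly"
  assumes "lead_coeff p = 1" shows "normalize p = p"
  using assms by (simp add: normalize_poly_def one_pCons[symmetric])

lemma normalized_monic:
  fixes p :: "'a::field_gcd poly"
  assumes "p \<noteq> 0" "normalize p = p" shows "lead_coeff p = 1"
proof -
  have "unit_factor (normalize p) = 1" using assms(1) by (simp add: unit_factor_normalize)
  hence "[:unit_factor (lead_coeff p):] = 1" using assms(2) by (simp add: unit_factor_poly_def)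
  hence u: "unit_factor (lead_coeff p) = 1" by (simp add: one_pCons)
  have "is_unit (lead_coeff p)" using assms(1) by (simp add: dvd_field_iff)
  hence "normalize (lead_coeff p) = 1" by (rule is_unit_normalize)
  thus ?thesis using unit_factor_mult_normalize[of "lead_coeff p"] u by simp
qed

theorem theorem5p13:
  fixes q :: nat and f :: "'a::{field_gcd,finite} poly"
  assumes "\<exists>p k. prime p \<and> k > 0 \<and> q = p ^ k"
    and "card (UNIV :: 'a set) = q ^ 2"
    and "unitary_self_reciprocal q f"
  shows "liouville f = (-1) ^ degree f"
proof -
  obtain p k where pk: "prime p" "k > 0" "q = p ^ k" using assms(1) by blast
  have chp: "CHAR('a) = p" using char_eq[OF pk(1) pk(3) pk(2) assms(2)] .
  have pr: "prime CHAR('a)" using chp pk by simp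
  have qk: "q = CHAR('a) ^ k" using chp pk by simp
  have Qq: "card (UNIV :: 'a set) = q * q" using assms(2) by (simp add: power2_eq_square)
  let ?U = "unitary_recip q :: 'a poly \<Rightarrow> 'a poly"
  have lf: "lead_coeff f = 1" and cf: "coeff f 0 \<noteq> 0" and Uf: "?U f = f"
    using assms(3) by (auto simp: unitary_self_reciprocal_def poly_0_coeff_0)
  have f0: "f \<noteq> 0" using lf by auto
  define M where "M = prime_factorization f"
  have fM: "prod_mset M = f"
    using prod_mset_prime_factorization[OF f0] monic_normalize[OF lf] M_def by simp
  have memM: "prime P \<and> coeff P 0 \<noteq> 0 \<and> lead_coeff P = 1 \<and> irreducible P" if "P \<in># M" for P
  proof -
    have prP: "prime P" and dv: "P dvd f" using that M_def by (auto simp: in_prime_factors_iff)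
    from dv obtain g where "f = P * g" by blast
    hence "coeff f 0 = coeff P 0 * coeff g 0" by (simp add: coeff_mult_0)
    hence "coeff P 0 \<noteq> 0" using cf by auto
    moreover have "lead_coeff P = 1"
      using prP normalized_monic[of P] by (simp add: prime_def)
    moreover have "irreducible P" using prP by (simp add: prime_elem_imp_irreducible)
    ultimately show ?thesis using prP by simp
  qed
  have Uprime: "prime (?U P)" if "P \<in># M" for P
  proof -
    have P: "prime P" "coeff P 0 \<noteq> 0" "lead_coeff P = 1" "irreducible P" using memM[OF that] by auto
    have lU: "lead_coeff (?U P) = 1" using lead_U[OF pr qk Qq P(2)] .
    have dU: "degree (?U P) = degree P" using degree_U[OF pr qk Qq P(2)] .
    have c0U: "coeff (?U P) 0 \<noteq> 0" using coeff0_U[OF pr qk Qq P(2)] P(2,3) by simp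
    have P0: "P \<noteq> 0" using P by auto
    have degP: "degree P \<noteq> 0"
      using P(4) P0 is_unit_iff_degree irreducible_not_unit by blast
    have "irreducible (?U P)"
    proof (rule Factorial_Ring.irreducibleI)
      show UP0: "?U P \<noteq> 0" using lU by auto
      show "\<not> is_unit (?U P)" using is_unit_iff_degree[OF UP0] dU degP by simp
      fix a b assume ab: "?U P = a * b"
      hence "coeff a 0 * coeff b 0 \<noteq> 0" using c0U by (simp add: coeff_mult_0)
      hence a0: "coeff a 0 \<noteq> 0" and b0: "coeff b 0 \<noteq> 0" by auto
      have "P = ?U a * ?U b" using UU[OF pr qk Qq P(2,3)] ab U_mult[OF pr qk Qq] by simp
      hence "is_unit (?U a) \<or> is_unit (?U b)" using P(4) Factorial_Ring.irreducibleD by blast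
      thus "is_unit a \<or> is_unit b"
        using degree_U[OF pr qk Qq a0] degree_U[OF pr qk Qq b0] a0 b0
        by (metis is_unit_iff_degree leading_coeff_0_iff zero_poly.rep_eq coeff_0 lead_U[OF pr qk Qq a0] lead_U[OF pr qk Qq b0] one_neq_zero)
    qed
    hence "prime_elem (?U P)" by (rule irreducible_imp_prime_elem)
    thus ?thesis using lU monic_normalize[OF lU] by (simp add: normalization_semidom_class.prime_def)
  qed
  have imgM: "image_mset ?U M = M"
  proof -
    have "prime_factorization (prod_mset (image_mset ?U M)) = image_mset ?U M"
      by (rule prime_factorization_prod_mset_primes) (use Uprime in auto)
    moreover have "prod_mset (image_mset ?U M) = f"
      using U_prod_mset[OF pr qk Qq, of M] fM Uf by simp
    ultimately show ?thesis using M_def by simp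
  qed
  define N where "N = filter_mset (\<lambda>P. even (degree P)) M"
  have imgN: "image_mset ?U N = N"
  proof -
    have "N = filter_mset (\<lambda>P. even (degree P)) (image_mset ?U M)" using imgM N_def by simp
    also have "\<dots> = image_mset ?U (filter_mset (\<lambda>x. even (degree (?U x))) M)"
      by (rule filter_mset_image_mset)
    also have "filter_mset (\<lambda>x. even (degree (?U x))) M = N"
      unfolding N_def by (rule filter_mset_cong) (use memM degree_U[OF pr qk Qq] in auto)
    finally show ?thesis by simp
  qed
  have "even (size N)"
  proof (rule inv_mset_even[OF imgN], intro ballI conjI)
    fix P assume "P \<in># N"
    hence PM: "P \<in># M" and ev: "even (degree P)" by (auto simp: N_def)
    have P: "prime P" "coeff P 0 \<noteq> 0" "lead_coeff P = 1" "irreducible P" using memM[OF PM] by auto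
    show "?U (?U P) = P" using UU[OF pr qk Qq P(2,3)] .
    show "?U P \<noteq> P"
    proof
      assume "?U P = P"
      hence "odd (degree P)" using sr_irred_odd[OF pr qk Qq P(4) P(3) P(2)] by simp
      thus False using ev by simp
    qed
  qed
  hence evsum: "even (size M + sum_mset (image_mset degree M))"
    using parity_count[of M degree] N_def by simp
  have degf: "degree f = sum_mset (image_mset degree M)"
    using degree_prod_mset'[of M] fM memM by fastforce
  have "liouville f = (-1) ^ size M" by (simp add: liouville_def M_def)
  also have "\<dots> = (-1) ^ degree f"
  proof (cases "even (size M)")
    case True
    hence "even (degree f)" using evsum degf by simp
    thus ?thesis using True by simp
  next
    case False
    hence "odd (degree f)" using evsum degf by simp
    thus ?thesis using False by simp
  qed
  finally show ?thesis .
qed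

end
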